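(* For every integer $n\ge 2$ and every nonzero real $x$, $$O_{n}'(x)+\frac{n}{x}O_{n}(x)=\sum_{j=1}^{n-1}O_{j}(x)O_{n-j}(x),$$ where $O_n'$ denotes the derivative of $O_n$ with respect to $x$.
   Context: For a nonzero real number $x$, the Oresme polynomials $O_n(x)$, $n\ge 0$, are defined by $O_{0}(x)=0$, $O_{1}(x)=\frac{1}{x}$, and $O_{n+1}(x)=O_{n}(x)-\frac{1}{x^{2}}O_{n-1}(x)$ for all $n\ge 1$; each $O_n$ is thus a rational function of $x$ (a polynomial in $1/x$), differentiable on $x\neq 0$. *)

theory Defs
  imports "HOL-Analysis.Analysis"
begin

fun oresme :: "nat \<Rightarrow> real \<Rightarrow> real" where
  "oresme 0 x = 0"
| "oresme (Suc 0) x = 1 / x"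
| "oresme (Suc (Suc n)) x = oresme (Suc n) x - (1 / x^2) * oresme n x"

end

theory Submission
  imports Defs
begin

fun od :: "nat \<Rightarrow> real \<Rightarrow> real" where
  "od 0 x = 0"
| "od (Suc 0) x = - 1 / x^2"
| "od (Suc (Suc n)) x = od (Suc n) x - (1 / x^2) * od n x + (2 / x^3) * oresme n x"

lemma od_deriv: "x \<noteq> 0 \<Longrightarrow> (oresme n has_real_derivative od n x) (at x)"
proof (induction n x rule: oresme.induct)
  case (1 x) then show ?case by simp
next
  case (2 x)
  have "((\<lambda>x. 1 / x) has_real_derivative - 1 / x^2) (at x)"
    using 2 by (auto intro!: derivative_eq_intros simp: power2_eq_square field_simps)
  then show ?case by simp
next
  case (3 n x)
  have e: "oresme (Suc (Suc n)) = (\<lambda>x. oresme (Suc n) x - (1 / x^2) * oresme n x)"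
    by (rule ext) simp
  have "((\<lambda>x. 1 / x^2) has_real_derivative - 2 / x^3) (at x)"
    using 3 by (auto intro!: derivative_eq_intros simp: power2_eq_square power3_eq_cube field_simps)
  from DERIV_diff[OF 3(1)[OF 3(3)] DERIV_mult[OF this 3(2)[OF 3(3)]]]
  show ?case unfolding e by (simp add: algebra_simps)
qed

definition S :: "nat \<Rightarrow> real \<Rightarrow> real" where
  "S n x = (\<Sum>j=1..n-1. oresme j x * oresme (n - j) x)"

lemma S_rec: "S (Suc (Suc n)) x = S (Suc n) x - (1/x^2) * S n x + oresme (Suc n) x / x"
proof -
  have a: "S (Suc (Suc n)) x = (\<Sum>j=1..n. oresme j x * oresme (Suc (Suc n) - j) x) + oresme (Suc n) x * oresme 1 x"
    unfolding S_def by (simp add: sum.atLeast_Suc_atMost_Suc_shift)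
  have b: "(\<Sum>j=1..n. oresme j x * oresme (Suc (Suc n) - j) x)
      = (\<Sum>j=1..n. oresme j x * oresme (Suc n - j) x) - (1/x^2) * (\<Sum>j=1..n. oresme j x * oresme (n - j) x)"
  proof -
    have "(\<Sum>j=1..n. oresme j x * oresme (Suc (Suc n) - j) x)
       = (\<Sum>j=1..n. oresme j x * oresme (Suc n - j) x - (1/x^2) * (oresme j x * oresme (n - j) x))"
    proof (rule sum.cong)
      fix j assume "j \<in> {1..n}"
      then have "Suc (Suc n) - j = Suc (Suc (n - j))" "Suc n - j = Suc (n - j)" by auto
      then show "oresme j x * oresme (Suc (Suc n) - j) x = oresme j x * oresme (Suc n - j) x - (1/x^2) * (oresme j x * oresme (n - j) x)"
        by (simp add: algebra_simps)
    qed simp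
    then show ?thesis by (simp add: sum_subtractf sum_distrib_left)
  qed
  have c: "(\<Sum>j=1..n. oresme j x * oresme (n - j) x) = S n x"
  proof (cases n)
    case 0 then show ?thesis by (simp add: S_def)
  next
    case (Suc m)
    then show ?thesis unfolding S_def by (simp add: sum.cl_ivl_Suc)
  qed
  have d: "(\<Sum>j=1..n. oresme j x * oresme (Suc n - j) x) = S (Suc n) x"
    unfolding S_def by simp
  show ?thesis using a b c d by (simp add: divide_inverse)
qed

lemma main: "x \<noteq> 0 \<Longrightarrow> od n x + (real n / x) * oresme n x = S n x"
proof (induction n x rule: oresme.induct)
  case (1 x) then show ?case by (simp add: S_def)
next
  case (2 x) then show ?case by (simp add: S_def power2_eq_square)
next
  case (3 n x)
  have "od (Suc (Suc n)) x + (real (Suc (Suc n)) / x) * oresme (Suc (Suc n)) x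
     = (od (Suc n) x + (real (Suc n) / x) * oresme (Suc n) x)
       - (1/x^2) * (od n x + (real n / x) * oresme n x) + oresme (Suc n) x / x"
    using 3(3) by (simp add: field_simps power2_eq_square power3_eq_cube)
  then show ?case using 3 S_rec by simp
qed

theorem mainTheorem12:
  fixes n :: nat and x :: real
  assumes "n \<ge> 2" and "x \<noteq> 0"
  shows "deriv (oresme n) x + (real n / x) * oresme n x
           = (\<Sum>j=1..n-1. oresme j x * oresme (n - j) x)"
  using main[OF assms(2), of n] DERIV_imp_deriv[OF od_deriv[OF assms(2)]]
  by (simp add: S_def)

end
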